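(* Let $\mu$ be a signature and let $\mathcal A$ be an ideal of $\Omega_\mu$. If $\mathcal A$ has the extension property, then $\mathcal A$ is representable, i.e. there is a relational structure $\mathfrak A$ of signature $\mu$ with $\mathrm{age}(\mathfrak A)=\mathcal A$.
   Context: A signature is a map $\mu:I\to\mathbb{N}^*$; a relational structure of signature $\mu$ is $\mathfrak A=(A;(R_i)_{i\in I})$ with $R_i$ a $\mu_i$-ary relation on $A$. Embeddings are injective maps preserving and reflecting all relations; $\mathfrak A\le \mathfrak B$ means $\mathfrak A$ embeds into $\mathfrak B$. $\Omega_\mu$ is the set of isomorphism types of finite structures of signature $\mu$, ordered by $\le$; an ideal is a non-empty, downward closed, up-directed subset. The age of $\mathfrak A$ is the set of isomorphism types of its finite induced substructures. For an ideal $\mathcal A$ of $\Omega_\mu$, a structure $\mathfrak A$ of signature $\mu$ (of any cardinality) with $\mathrm{age}(\mathfrak A)\subseteq\mathcal A$ is extendable w.r.t. $\mathcal A$ if for every $\mathfrak B\in\mathcal A$ there is a structure $\mathfrak C$ with $\mathrm{age}(\mathfrak C)\subseteq\mathcal A$ which extends both $\mathfrak A$ and $\mathfrak B$ (both embed into $\mathfrak C$). $\mathcal A$ has the extension property if every structure $\mathfrak A$ of signature $\mu$ with $|A|<\kappa:=|\mathcal A|$ and $\mathrm{age}(\mathfrak A)\subseteq\mathcal A$ is extendable w.r.t. $\mathcal A$. *)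

theory Defs
  imports Main
begin

text \<open>The signature is a pair (I, mu) with I the index set and mu :: 'i => nat the arities.\<close>

type_synonym ('i, 'a) struc = "'a set \<times> ('i \<Rightarrow> 'a list \<Rightarrow> bool)"

definition signature :: "'i set \<Rightarrow> ('i \<Rightarrow> nat) \<Rightarrow> bool" where
  "signature I mu \<longleftrightarrow> (\<forall>i\<in>I. mu i > 0)"

definition is_struct :: "'i set \<Rightarrow> ('i \<Rightarrow> nat) \<Rightarrow> ('i, 'a) struc \<Rightarrow> bool" where
  "is_struct I mu S \<longleftrightarrow>
     (\<forall>i xs. snd S i xs \<longrightarrow> i \<in> I \<and> length xs = mu i \<and> set xs \<subseteq> fst S)"

definition embedding :: "'i set \<Rightarrow> ('i \<Rightarrow> nat) \<Rightarrow> ('a \<Rightarrow> 'b) \<Rightarrow> ('i, 'a) struc \<Rightarrow> ('i, 'b) struc \<Rightarrow> bool" where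
  "embedding I mu f S T \<longleftrightarrow>
     inj_on f (fst S) \<and> f ` fst S \<subseteq> fst T \<and>
     (\<forall>i\<in>I. \<forall>xs. length xs = mu i \<and> set xs \<subseteq> fst S \<longrightarrow> (snd S i xs \<longleftrightarrow> snd T i (map f xs)))"

definition embeds :: "'i set \<Rightarrow> ('i \<Rightarrow> nat) \<Rightarrow> ('i, 'a) struc \<Rightarrow> ('i, 'b) struc \<Rightarrow> bool" where
  "embeds I mu S T \<longleftrightarrow> (\<exists>f. embedding I mu f S T)"

definition isomorphic :: "'i set \<Rightarrow> ('i \<Rightarrow> nat) \<Rightarrow> ('i, 'a) struc \<Rightarrow> ('i, 'b) struc \<Rightarrow> bool" where
  "isomorphic I mu S T \<longleftrightarrow> (\<exists>f. embedding I mu f S T \<and> bij_betw f (fst S) (fst T))"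

text \<open>Finite structures are represented by structures whose carrier is a finite set of
  natural numbers (every finite structure is isomorphic to one of these).\<close>
definition fin_structs :: "'i set \<Rightarrow> ('i \<Rightarrow> nat) \<Rightarrow> ('i, nat) struc set" where
  "fin_structs I mu = {S. is_struct I mu S \<and> finite (fst S)}"

definition isotype :: "'i set \<Rightarrow> ('i \<Rightarrow> nat) \<Rightarrow> ('i, 'a) struc \<Rightarrow> ('i, nat) struc set" where
  "isotype I mu S = {T \<in> fin_structs I mu. isomorphic I mu T S}"

definition Omega :: "'i set \<Rightarrow> ('i \<Rightarrow> nat) \<Rightarrow> ('i, nat) struc set set" where
  "Omega I mu = isotype I mu ` fin_structs I mu"

definition type_le :: "'i set \<Rightarrow> ('i \<Rightarrow> nat) \<Rightarrow> ('i, nat) struc set \<Rightarrow> ('i, nat) struc set \<Rightarrow> bool" where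
  "type_le I mu X Y \<longleftrightarrow> (\<exists>S\<in>X. \<exists>T\<in>Y. embeds I mu S T)"

definition ideal :: "'i set \<Rightarrow> ('i \<Rightarrow> nat) \<Rightarrow> ('i, nat) struc set set \<Rightarrow> bool" where
  "ideal I mu A \<longleftrightarrow>
     A \<subseteq> Omega I mu \<and> A \<noteq> {} \<and>
     (\<forall>X\<in>A. \<forall>Y\<in>Omega I mu. type_le I mu Y X \<longrightarrow> Y \<in> A) \<and>
     (\<forall>X\<in>A. \<forall>Y\<in>A. \<exists>Z\<in>A. type_le I mu X Z \<and> type_le I mu Y Z)"

definition induced :: "('i, 'a) struc \<Rightarrow> 'a set \<Rightarrow> ('i, 'a) struc" where
  "induced S X = (X, \<lambda>i xs. snd S i xs \<and> set xs \<subseteq> X)"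

definition age :: "'i set \<Rightarrow> ('i \<Rightarrow> nat) \<Rightarrow> ('i, 'a) struc \<Rightarrow> ('i, nat) struc set set" where
  "age I mu S = {isotype I mu (induced S X) | X. X \<subseteq> fst S \<and> finite X}"

text \<open>Extendability w.r.t. an ideal; the amalgamating structure C is taken with the same
  carrier type as the given structure.\<close>
definition extendable :: "'i set \<Rightarrow> ('i \<Rightarrow> nat) \<Rightarrow> ('i, nat) struc set set \<Rightarrow> ('i, 'a) struc \<Rightarrow> bool" where
  "extendable I mu A S \<longleftrightarrow>
     age I mu S \<subseteq> A \<and>
     (\<forall>X\<in>A. \<forall>B\<in>X. \<exists>C :: ('i, 'a) struc.
        is_struct I mu C \<and> age I mu C \<subseteq> A \<and> embeds I mu S C \<and> embeds I mu B C)"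

text \<open>Universe type for structures of cardinality up to |Omega_mu| (infinite).\<close>
type_synonym 'i univ = "('i, nat) struc set"

text \<open>Structures are taken with carrier in the type 'i univ, which is infinite and
  contains a copy of every set of cardinality < |A|.\<close>
definition extension_property :: "'i set \<Rightarrow> ('i \<Rightarrow> nat) \<Rightarrow> ('i, nat) struc set set \<Rightarrow> bool" where
  "extension_property I mu A \<longleftrightarrow>
     (\<forall>S :: ('i, 'i univ) struc.
        is_struct I mu S \<and> (card_of (fst S), card_of A) \<in> ordLess \<and> age I mu S \<subseteq> A
        \<longrightarrow> extendable I mu A S)"

end

theory Submission
  imports Defs
begin


lemma emb_comp:
  assumes "embedding I mu f S T" "embedding I mu g T U"
  shows "embedding I mu (g \<circ> f) S U"
proof -
  have "inj_on (g \<circ> f) (fst S)" using assms unfolding embedding_def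
    by (meson comp_inj_on inj_on_subset)
  moreover have "(g \<circ> f) ` fst S \<subseteq> fst U" using assms unfolding embedding_def by (auto simp: image_subset_iff)
  moreover have "\<forall>i\<in>I. \<forall>xs. length xs = mu i \<and> set xs \<subseteq> fst S \<longrightarrow> (snd S i xs \<longleftrightarrow> snd U i (map (g \<circ> f) xs))"
  proof (intro ballI allI impI)
    fix i xs assume i: "i \<in> I" and xs: "length xs = mu i \<and> set xs \<subseteq> fst S"
    have "set (map f xs) \<subseteq> fst T" using xs assms(1) unfolding embedding_def by auto
    moreover have "length (map f xs) = mu i" using xs by simp
    ultimately have e2: "snd T i (map f xs) \<longleftrightarrow> snd U i (map g (map f xs))"
      using assms(2) i unfolding embedding_def by blast
    have e1: "snd S i xs \<longleftrightarrow> snd T i (map f xs)" using assms(1) i xs unfolding embedding_def by blast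
    show "snd S i xs \<longleftrightarrow> snd U i (map (g \<circ> f) xs)" using e1 e2 by simp
  qed
  ultimately show ?thesis unfolding embedding_def by blast
qed

lemma emb_id: "embedding I mu id S S"
  unfolding embedding_def by auto

lemma iso_refl: "isomorphic I mu S S"
  unfolding isomorphic_def using emb_id[of I mu S] bij_betw_id[of "fst S"] by blast

lemma iso_trans: "isomorphic I mu S T \<Longrightarrow> isomorphic I mu T U \<Longrightarrow> isomorphic I mu S U"
proof -
  assume a: "isomorphic I mu S T" "isomorphic I mu T U"
  obtain f where f: "embedding I mu f S T" "bij_betw f (fst S) (fst T)" using a(1) unfolding isomorphic_def by blast
  obtain g where g: "embedding I mu g T U" "bij_betw g (fst T) (fst U)" using a(2) unfolding isomorphic_def by blast
  show ?thesis unfolding isomorphic_def using emb_comp[OF f(1) g(1)] bij_betw_trans[OF f(2) g(2)] by blast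
qed

lemma iso_sym: assumes "isomorphic I mu S T" shows "isomorphic I mu T S"
proof -
  obtain f where f: "embedding I mu f S T" "bij_betw f (fst S) (fst T)"
    using assms unfolding isomorphic_def by blast
  define g where "g = the_inv_into (fst S) f"
  have bg: "bij_betw g (fst T) (fst S)" unfolding g_def by (rule bij_betw_the_inv_into[OF f(2)])
  have fg: "\<And>y. y \<in> fst T \<Longrightarrow> f (g y) = y" unfolding g_def
    by (rule f_the_inv_into_f_bij_betw[OF f(2)])
  have "embedding I mu g T S"
    unfolding embedding_def
  proof (intro conjI ballI allI impI)
    show "inj_on g (fst T)" using bg by (rule bij_betw_imp_inj_on)
    show "g ` fst T \<subseteq> fst S" using bij_betw_imp_surj_on[OF bg] by simp
    fix i xs assume i: "i \<in> I" and xs: "length xs = mu i \<and> set xs \<subseteq> fst T"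
    have "map (f \<circ> g) xs = xs" by (rule map_idI) (use xs fg in auto)
    then have m: "map f (map g xs) = xs" by simp
    have "g ` fst T \<subseteq> fst S" using bij_betw_imp_surj_on[OF bg] by simp
    then have s: "set (map g xs) \<subseteq> fst S" using xs by auto
    have l: "length (map g xs) = mu i" using xs by simp
    have "snd S i (map g xs) \<longleftrightarrow> snd T i (map f (map g xs))"
      using f(1) i l s unfolding embedding_def by blast
    then show "snd T i xs \<longleftrightarrow> snd S i (map g xs)" using m by simp
  qed
  then show ?thesis using bg unfolding isomorphic_def by blast
qed

lemma isotype_iso: assumes "isomorphic I mu S T" shows "isotype I mu S = isotype I mu T"
proof -
  have "\<And>R. isomorphic I mu R S \<longleftrightarrow> isomorphic I mu R T"
    using iso_trans[OF _ assms] iso_trans[OF _ iso_sym[OF assms]] by blast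
  then show ?thesis unfolding isotype_def by auto
qed

lemma emb_induced_iso:
  assumes "embedding I mu f S T" "X \<subseteq> fst S"
  shows "isomorphic I mu (induced S X) (induced T (f ` X))"
proof -
  have inj: "inj_on f X" using assms unfolding embedding_def by (meson inj_on_subset)
  have "embedding I mu f (induced S X) (induced T (f ` X))"
  proof -
    have "\<forall>i\<in>I. \<forall>xs. length xs = mu i \<and> set xs \<subseteq> X \<longrightarrow> snd S i xs = snd T i (map f xs)"
      using assms unfolding embedding_def by blast
    then show ?thesis using inj unfolding embedding_def induced_def by auto
  qed
  moreover have "bij_betw f X (f ` X)" using inj by (simp add: bij_betw_imageI)
  ultimately show ?thesis unfolding isomorphic_def induced_def by auto
qed

lemma iso_induced_self: "isomorphic I mu S (induced S (fst S))"
proof -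
  have "embedding I mu id S (induced S (fst S))"
    unfolding embedding_def induced_def by auto
  moreover have "bij_betw id (fst S) (fst (induced S (fst S)))" unfolding induced_def by simp
  ultimately show ?thesis unfolding isomorphic_def by blast
qed

lemma emb_age: assumes "embedding I mu f S T" shows "age I mu S \<subseteq> age I mu T"
proof
  fix Y assume "Y \<in> age I mu S"
  then obtain X where X: "Y = isotype I mu (induced S X)" "X \<subseteq> fst S" "finite X"
    unfolding age_def by blast
  have "Y = isotype I mu (induced T (f ` X))" using X emb_induced_iso[OF assms X(2)] isotype_iso by blast
  moreover have "f ` X \<subseteq> fst T" using assms X unfolding embedding_def by auto
  moreover have "finite (f ` X)" using X(3) by simp
  ultimately show "Y \<in> age I mu T" unfolding age_def by blast
qed

lemma emb_in_age:
  assumes "embedding I mu f B T" "finite (fst B)"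
  shows "isotype I mu B \<in> age I mu T"
proof -
  have "isotype I mu B = isotype I mu (induced B (fst B))" using iso_induced_self isotype_iso by blast
  also have "\<dots> = isotype I mu (induced T (f ` fst B))"
    using emb_induced_iso[OF assms(1)] isotype_iso by blast
  finally have e: "isotype I mu B = isotype I mu (induced T (f ` fst B))" .
  have "f ` fst B \<subseteq> fst T" using assms(1) unfolding embedding_def by blast
  moreover have "finite (f ` fst B)" using assms(2) by simp
  ultimately show ?thesis unfolding age_def e by blast
qed

lemma Omega_mem:
  assumes "X \<in> Omega I mu" "B \<in> X"
  shows "X = isotype I mu B" "B \<in> fin_structs I mu"
proof -
  obtain R where R: "X = isotype I mu R" "R \<in> fin_structs I mu" using assms unfolding Omega_def by blast
  show "B \<in> fin_structs I mu" using assms R unfolding isotype_def by blast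
  have "isomorphic I mu B R" using assms R unfolding isotype_def by blast
  then have "isotype I mu B = isotype I mu R" by (rule isotype_iso)
  then show "X = isotype I mu B" using R(1) by simp
qed

lemma Omega_ne: assumes "X \<in> Omega I mu" shows "\<exists>B. B \<in> X"
proof -
  obtain R where R: "X = isotype I mu R" "R \<in> fin_structs I mu" using assms unfolding Omega_def by blast
  then have "R \<in> X" using iso_refl[of I mu R] unfolding isotype_def by blast
  then show ?thesis by blast
qed

lemma isotype_Omega: "B \<in> fin_structs I mu \<Longrightarrow> isotype I mu B \<in> Omega I mu"
  unfolding Omega_def by blast

definition pb :: "'i set \<Rightarrow> ('i \<Rightarrow> nat) \<Rightarrow> ('i, 'b) struc \<Rightarrow> 'a set \<Rightarrow> ('a \<Rightarrow> 'b) \<Rightarrow> ('i, 'a) struc" where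
  "pb I mu C Y \<phi> = (Y, \<lambda>i xs. i \<in> I \<and> length xs = mu i \<and> set xs \<subseteq> Y \<and> snd C i (map \<phi> xs))"

lemma pb_struct: "is_struct I mu (pb I mu C Y \<phi>)"
  unfolding is_struct_def pb_def by auto

lemma pb_emb: assumes "inj_on \<phi> Y" "\<phi> ` Y \<subseteq> fst C"
  shows "embedding I mu \<phi> (pb I mu C Y \<phi>) C"
  using assms unfolding embedding_def pb_def by auto



lemma iso_emb: "isomorphic I mu S T \<Longrightarrow> \<exists>f. embedding I mu f S T"
  unfolding isomorphic_def by blast

lemma embeds_comp: "embeds I mu S T \<Longrightarrow> embeds I mu T U \<Longrightarrow> embeds I mu S U"
  unfolding embeds_def using emb_comp by blast

lemma iso_embeds: "isomorphic I mu S T \<Longrightarrow> embeds I mu S T"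
  unfolding isomorphic_def embeds_def by blast

lemma type_le_refl: assumes "X \<in> Omega I mu" shows "type_le I mu X X"
proof -
  obtain B where "B \<in> X" using Omega_ne[OF assms] by blast
  then show ?thesis unfolding type_le_def embeds_def using emb_id[of I mu B] by blast
qed

lemma type_le_trans:
  assumes "X \<in> Omega I mu" "Y \<in> Omega I mu" "W \<in> Omega I mu"
    "type_le I mu X Y" "type_le I mu Y W"
  shows "type_le I mu X W"
proof -
  obtain S T where ST: "S \<in> X" "T \<in> Y" "embeds I mu S T" using assms(4) unfolding type_le_def by blast
  obtain T' U where TU: "T' \<in> Y" "U \<in> W" "embeds I mu T' U" using assms(5) unfolding type_le_def by blast
  have "Y = isotype I mu T'" using Omega_mem[OF assms(2) TU(1)] by simp
  then have "isomorphic I mu T T'" using ST(2) unfolding isotype_def by blast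
  then have "embeds I mu T T'" by (rule iso_embeds)
  then have "embeds I mu S U" using ST(3) TU(3) embeds_comp by blast
  then show ?thesis using ST(1) TU(2) unfolding type_le_def by blast
qed

lemma ideal_upper:
  assumes idl: "ideal I mu A" and F: "finite F" "F \<noteq> {}" "F \<subseteq> A"
  shows "\<exists>Z\<in>A. \<forall>X\<in>F. type_le I mu X Z"
  using F
proof (induction F rule: finite_ne_induct)
  case (singleton x)
  then show ?case using type_le_refl idl unfolding ideal_def by blast
next
  case (insert x F)
  then obtain Z where Z: "Z \<in> A" "\<forall>X\<in>F. type_le I mu X Z" by blast
  have xA: "x \<in> A" using insert by blast
  obtain W where W: "W \<in> A" "type_le I mu x W" "type_le I mu Z W" using idl Z(1) xA unfolding ideal_def by blast
  have AO: "A \<subseteq> Omega I mu" using idl unfolding ideal_def by blast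
  have "\<forall>X\<in>F. type_le I mu X W"
  proof
    fix X assume "X \<in> F"
    then show "type_le I mu X W" using type_le_trans[of X I mu Z W] Z W AO insert.prems by blast
  qed
  then show ?case using W by blast
qed

lemma induced_emb: "W \<subseteq> fst T \<Longrightarrow> embedding I mu id (induced T W) T"
  unfolding embedding_def induced_def by auto

lemma induced_struct: "is_struct I mu T \<Longrightarrow> is_struct I mu (induced T W)"
  unfolding is_struct_def induced_def by auto

lemma age_struct_le:
  assumes idl: "ideal I mu A" and Z: "Z \<in> A" and T: "T \<in> Z"
    and f: "embedding I mu f S T"
  shows "age I mu S \<subseteq> A"
proof
  have AO: "A \<subseteq> Omega I mu" using idl unfolding ideal_def by blast
  have Tfin: "T \<in> fin_structs I mu" using Omega_mem(2)[of Z I mu T] AO Z T by blast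
  fix Y assume "Y \<in> age I mu S"
  then obtain X where X: "Y = isotype I mu (induced S X)" "X \<subseteq> fst S" "finite X"
    unfolding age_def by blast
  have Y: "Y = isotype I mu (induced T (f ` X))" using X emb_induced_iso[OF f X(2)] isotype_iso by blast
  have sub: "f ` X \<subseteq> fst T" using f X unfolding embedding_def by auto
  have "is_struct I mu T" using Tfin unfolding fin_structs_def by blast
  then have "is_struct I mu (induced T (f ` X))" by (rule induced_struct)
  then have fin: "induced T (f ` X) \<in> fin_structs I mu"
    using X(3) unfolding fin_structs_def induced_def by auto
  have YO: "Y \<in> Omega I mu" using Y fin isotype_Omega by blast
  have "induced T (f ` X) \<in> Y" using Y fin iso_refl unfolding isotype_def by blast
  then have "type_le I mu Y Z" unfolding type_le_def embeds_def using T induced_emb[OF sub] by blast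
  then show "Y \<in> A" using idl Z YO unfolding ideal_def by blast
qed

lemma age_struct_ge:
  assumes idl: "ideal I mu A" and Z: "Z \<in> A" and T: "T \<in> Z"
    and up: "\<forall>X\<in>A. type_le I mu X Z"
    and g: "embedding I mu g T S"
  shows "A \<subseteq> age I mu S"
proof
  have AO: "A \<subseteq> Omega I mu" using idl unfolding ideal_def by blast
  fix X assume XA: "X \<in> A"
  obtain S' T' h where h: "S' \<in> X" "T' \<in> Z" "embedding I mu h S' T'"
    using up XA unfolding type_le_def embeds_def by blast
  have "Z = isotype I mu T" using Omega_mem(1)[of Z I mu T] AO Z T by blast
  then have "isomorphic I mu T' T" using h(2) unfolding isotype_def by blast
  then obtain k where k: "embedding I mu k T' T" using iso_emb by blast
  have e: "embedding I mu (g \<circ> (k \<circ> h)) S' S" using emb_comp[OF emb_comp[OF h(3) k] g] .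
  have "S' \<in> fin_structs I mu" "X = isotype I mu S'" using Omega_mem[of X I mu S'] AO XA h(1) by blast+
  then show "X \<in> age I mu S" using emb_in_age[OF e] unfolding fin_structs_def by auto
qed

lemma finite_case:
  assumes idl: "ideal I mu A" and fin: "finite A"
  shows "\<exists>S :: ('i, 'i univ) struc. is_struct I mu S \<and> age I mu S = A"
proof -
  have AO: "A \<subseteq> Omega I mu" and ne: "A \<noteq> {}" using idl unfolding ideal_def by blast+
  obtain Z where Z: "Z \<in> A" "\<forall>X\<in>A. type_le I mu X Z" using ideal_upper[OF idl fin ne] by blast
  obtain T where T: "T \<in> Z" using Omega_ne AO Z(1) by blast
  define h :: "nat \<Rightarrow> 'i univ" where "h n = {({n}, \<lambda>_ _. False)}" for n
  have injh: "inj h" unfolding h_def inj_def by auto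
  define Y where "Y = h ` fst T"
  define \<phi> where "\<phi> = the_inv_into (fst T) h"
  have bij: "bij_betw \<phi> Y (fst T)" unfolding \<phi>_def Y_def
    by (rule bij_betw_the_inv_into) (simp add: bij_betw_imageI inj_on_subset[OF injh])
  define S where "S = pb I mu T Y \<phi>"
  have e: "embedding I mu \<phi> S T" unfolding S_def
    by (rule pb_emb) (use bij_betw_imp_inj_on[OF bij] bij_betw_imp_surj_on[OF bij] in auto)
  have iso: "isomorphic I mu S T" unfolding isomorphic_def using e bij unfolding S_def pb_def by auto
  obtain g where g: "embedding I mu g T S" using iso_emb[OF iso_sym[OF iso]] by blast
  have "age I mu S \<subseteq> A" using age_struct_le[OF idl Z(1) T e] .
  moreover have "A \<subseteq> age I mu S" using age_struct_ge[OF idl Z(1) T Z(2) g] .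
  ultimately show ?thesis using pb_struct unfolding S_def by blast
qed


unbundle cardinal_syntax

lemma vac_emb:
  assumes "signature I mu" "fst S = {}"
  shows "embedding I mu f S T"
proof -
  have "\<And>i. i \<in> I \<Longrightarrow> mu i \<noteq> 0"
    using assms(1) unfolding signature_def by fastforce
  then show ?thesis using assms(2) unfolding embedding_def by auto (metis less_irrefl)+
qed

locale ctx =
  fixes I :: "'i set" and mu :: "'i \<Rightarrow> nat" and A :: "('i, nat) struc set set"
    and enc :: "'i univ \<times> nat \<Rightarrow> 'i univ"
  assumes sig: "signature I mu" and idl: "ideal I mu A" and ep: "extension_property I mu A"
    and infA: "infinite A" and enc: "inj_on enc (A \<times> UNIV)"
begin

definition "r = card_of A"
definition "rep x = (SOME B. B \<in> x)"
definition "sz x = card (fst (rep x))"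
definition "D Sg = enc ` (SIGMA x:Sg. {..<sz x})"
definition "dc Sg \<longleftrightarrow> Sg \<subseteq> A \<and> (\<forall>x\<in>Sg. \<forall>y. (y, x) \<in> r \<longrightarrow> y \<in> Sg)"
definition "P = {(M :: ('i, 'i univ) struc, Sg). is_struct I mu M \<and> age I mu M \<subseteq> A \<and> dc Sg
   \<and> Sg \<subseteq> age I mu M \<and> fst M \<subseteq> D Sg}"
definition "le M N \<longleftrightarrow> fst M \<subseteq> fst N \<and> (\<forall>i xs. snd M i xs \<longleftrightarrow> snd N i xs \<and> set xs \<subseteq> fst M)"
definition "Q p q \<longleftrightarrow> le (fst p) (fst q) \<and> snd p \<subseteq> snd q"

lemma AO: "A \<subseteq> Omega I mu" using idl unfolding ideal_def by blast

lemma rep: assumes "x \<in> A"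
  shows "rep x \<in> x" "rep x \<in> fin_structs I mu" "x = isotype I mu (rep x)" "finite (fst (rep x))"
proof -
  show r1: "rep x \<in> x" unfolding rep_def using Omega_ne AO assms by (metis subsetD someI_ex)
  show "rep x \<in> fin_structs I mu" "x = isotype I mu (rep x)" using Omega_mem[OF _ r1] AO assms by blast+
  then show "finite (fst (rep x))" unfolding fin_structs_def by blast
qed

lemma D_mono: "S1 \<subseteq> S2 \<Longrightarrow> D S1 \<subseteq> D S2"
  unfolding D_def by blast

lemma r_wo: "Well_order r" unfolding r_def by (rule card_of_Well_order)
lemma r_F: "Field r = A" unfolding r_def by (rule Field_card_of)

lemma emptyP: "(({}, \<lambda>_ _. False), {}) \<in> P"
proof -
  define E :: "('i, 'i univ) struc" where "E = ({}, \<lambda>_ _. False)"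
  define E0 :: "('i, nat) struc" where "E0 = ({}, \<lambda>_ _. False)"
  have E0f: "E0 \<in> fin_structs I mu" unfolding E0_def fin_structs_def is_struct_def by simp
  have iso: "isomorphic I mu (induced E {}) E0"
    unfolding isomorphic_def using vac_emb[OF sig, where S="induced E {}" and f="\<lambda>_. 0" and T=E0]
    by (auto simp: induced_def E0_def bij_betw_def intro!: exI[where x="\<lambda>_. 0"])
  obtain X0 where X0: "X0 \<in> A" using idl unfolding ideal_def by blast
  obtain B0 where B0: "B0 \<in> X0" using Omega_ne AO X0 by blast
  have "E0 \<in> isotype I mu E0" using E0f iso_refl unfolding isotype_def by blast
  moreover have "embeds I mu E0 B0" unfolding embeds_def using vac_emb[OF sig, where S=E0 and f="\<lambda>_. 0" and T=B0] E0_def by auto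
  ultimately have "type_le I mu (isotype I mu E0) X0" unfolding type_le_def using B0 by blast
  then have "isotype I mu E0 \<in> A" using idl X0 isotype_Omega[OF E0f] unfolding ideal_def by blast
  then have in_A: "isotype I mu (induced E {}) \<in> A" using isotype_iso[OF iso] by simp
  have "age I mu E \<subseteq> A"
  proof
    fix Y assume "Y \<in> age I mu E"
    then obtain X where "Y = isotype I mu (induced E X)" "X \<subseteq> fst E" unfolding age_def by blast
    then show "Y \<in> A" using in_A unfolding E_def by simp
  qed
  moreover have "is_struct I mu E" unfolding E_def is_struct_def by simp
  moreover have "dc {}" unfolding dc_def by simp
  ultimately show ?thesis unfolding P_def E_def by simp
qed

lemma small:
  assumes MP: "(M, Sg) \<in> P" and a: "a \<in> A" "a \<notin> Sg"
  shows "(card_of (fst M), card_of A) \<in> ordLess"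
proof -
  have dcS: "dc Sg" and MD: "fst M \<subseteq> D Sg" using MP unfolding P_def by auto
  have SA: "Sg \<subseteq> A" using dcS unfolding dc_def by blast
  have tot: "total_on A r" using r_wo r_F unfolding order_on_defs by simp
  have Su: "Sg \<subseteq> underS r a"
  proof
    fix x assume x: "x \<in> Sg"
    then have xa: "x \<noteq> a" "x \<in> A" using a SA by auto
    then have "(x, a) \<in> r \<or> (a, x) \<in> r" using tot a unfolding total_on_def by blast
    moreover have "(a, x) \<notin> r" using dcS x a unfolding dc_def by blast
    ultimately show "x \<in> underS r a" using xa unfolding underS_def by blast
  qed
  show ?thesis
  proof (cases "finite Sg")
    case True
    have "finite (SIGMA x:Sg. {..<sz x})" using True by (intro finite_SigmaI) auto
    then have "finite (fst M)" using MD unfolding D_def by (meson finite_imageI finite_subset)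
    then show ?thesis
      using finite_ordLess_infinite[OF card_of_Well_order card_of_Well_order] infA
      by (simp add: Field_card_of)
  next
    case False
    have "|fst M| \<le>o |D Sg|" using MD by (rule card_of_mono1)
    also have "|D Sg| \<le>o |SIGMA x:Sg. {..<sz x}|" unfolding D_def by (rule card_of_image)
    also have "|SIGMA x:Sg. {..<sz x}| \<le>o |Sg \<times> (UNIV :: nat set)|" by (rule card_of_mono1) blast
    also have "|Sg \<times> (UNIV :: nat set)| =o |Sg|"
      using card_of_Times_infinite[OF False, of "UNIV :: nat set"] False infinite_iff_card_of_nat by blast
    also have "|Sg| \<le>o |underS r a|" using Su by (rule card_of_mono1)
    also have "|underS r a| <o r" using card_of_underS[of r a] r_F a unfolding r_def
      using card_of_Card_order by blast
    finally show ?thesis unfolding r_def .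
  qed
qed

lemma Pmem: "p \<in> P \<longleftrightarrow> is_struct I mu (fst p) \<and> age I mu (fst p) \<subseteq> A \<and> dc (snd p)
   \<and> snd p \<subseteq> age I mu (fst p) \<and> fst (fst p) \<subseteq> D (snd p)"
  by (cases p) (simp add: P_def)

lemma chain_bound:
  assumes CP: "C \<subseteq> P" and ch: "\<forall>p\<in>C. \<forall>q\<in>C. Q p q \<or> Q q p" and ne: "C \<noteq> {}"
  shows "\<exists>u\<in>P. \<forall>p\<in>C. Q p u"
proof -
  define UC where "UC = (\<Union>p\<in>C. fst (fst p))"
  define U :: "('i, 'i univ) struc" where "U = (UC, \<lambda>i xs. \<exists>p\<in>C. snd (fst p) i xs)"
  define SgU where "SgU = (\<Union>p\<in>C. snd p)"
  have Pm: "\<And>p. p \<in> C \<Longrightarrow> is_struct I mu (fst p) \<and> age I mu (fst p) \<subseteq> A \<and> dc (snd p)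
   \<and> snd p \<subseteq> age I mu (fst p) \<and> fst (fst p) \<subseteq> D (snd p)" using CP Pmem by blast
  have stp: "\<And>p. p \<in> C \<Longrightarrow> is_struct I mu (fst p)" using Pm by blast
  have key: "\<And>p i xs. p \<in> C \<Longrightarrow> snd (fst p) i xs \<longleftrightarrow> snd U i xs \<and> set xs \<subseteq> fst (fst p)"
  proof -
    fix p i xs assume p: "p \<in> C"
    show "snd (fst p) i xs \<longleftrightarrow> snd U i xs \<and> set xs \<subseteq> fst (fst p)"
    proof
      assume "snd (fst p) i xs"
      then show "snd U i xs \<and> set xs \<subseteq> fst (fst p)" using p stp[OF p] unfolding U_def is_struct_def by auto
    next
      assume h: "snd U i xs \<and> set xs \<subseteq> fst (fst p)"
      then obtain q where q: "q \<in> C" "snd (fst q) i xs" unfolding U_def by auto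
      from ch p q(1) have "Q p q \<or> Q q p" by blast
      then show "snd (fst p) i xs" using h q(2) unfolding Q_def le_def by blast
    qed
  qed
  have sub: "\<And>p. p \<in> C \<Longrightarrow> fst (fst p) \<subseteq> UC" unfolding UC_def by blast
  have fin_sub: "\<And>X. finite X \<Longrightarrow> X \<subseteq> UC \<longrightarrow> (\<exists>p\<in>C. X \<subseteq> fst (fst p))"
  proof -
    fix X :: "'i univ set" assume "finite X"
    then show "X \<subseteq> UC \<longrightarrow> (\<exists>p\<in>C. X \<subseteq> fst (fst p))"
    proof (induction X rule: finite_induct)
      case empty then show ?case using ne by blast
    next
      case (insert x F)
      show ?case
      proof
        assume h: "insert x F \<subseteq> UC"
        then obtain p where p: "p \<in> C" "F \<subseteq> fst (fst p)" using insert.IH by blast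
        obtain q where q: "q \<in> C" "x \<in> fst (fst q)" using h unfolding UC_def by blast
        from ch p(1) q(1) have "Q p q \<or> Q q p" by blast
        then show "\<exists>p\<in>C. insert x F \<subseteq> fst (fst p)" using p q unfolding Q_def le_def by blast
      qed
    qed
  qed
  have emb: "embedding I mu id (fst p) U" if p: "p \<in> C" for p
  proof -
    have "\<forall>i\<in>I. \<forall>xs. length xs = mu i \<and> set xs \<subseteq> fst (fst p) \<longrightarrow> (snd (fst p) i xs \<longleftrightarrow> snd U i (map id xs))"
      using key[OF p] by simp
    moreover have "id ` fst (fst p) \<subseteq> fst U" using sub[OF p] unfolding U_def by simp
    ultimately show ?thesis unfolding embedding_def by simp
  qed
  have ageU: "age I mu U \<subseteq> A"
  proof
    fix Y assume "Y \<in> age I mu U"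
    then obtain X where X: "Y = isotype I mu (induced U X)" "X \<subseteq> UC" "finite X"
      unfolding age_def U_def by auto
    then obtain p where p: "p \<in> C" "X \<subseteq> fst (fst p)" using fin_sub by blast
    have "induced U X = induced (fst p) X"
      unfolding induced_def using key[OF p(1)] p(2) by (auto intro!: ext)
    then have "Y \<in> age I mu (fst p)" using X p unfolding age_def by auto
    then show "Y \<in> A" using Pm[OF p(1)] by blast
  qed
  have stU: "is_struct I mu U"
    unfolding is_struct_def
  proof (intro allI impI)
    fix i xs assume "snd U i xs"
    then obtain p where p: "p \<in> C" "snd (fst p) i xs" unfolding U_def by auto
    then show "i \<in> I \<and> length xs = mu i \<and> set xs \<subseteq> fst U"
      using stp[OF p(1)] sub[OF p(1)] unfolding is_struct_def U_def by auto
  qed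
  have dcU: "dc SgU" unfolding dc_def
  proof (intro conjI ballI allI impI)
    show "SgU \<subseteq> A" unfolding SgU_def using Pm unfolding dc_def by blast
    fix x y assume x: "x \<in> SgU" and y: "(y, x) \<in> r"
    then obtain p where p: "p \<in> C" "x \<in> snd p" unfolding SgU_def by blast
    then have "y \<in> snd p" using Pm[OF p(1)] y unfolding dc_def by blast
    then show "y \<in> SgU" using p unfolding SgU_def by blast
  qed
  have SgU_age: "SgU \<subseteq> age I mu U"
  proof
    fix x assume "x \<in> SgU"
    then obtain p where p: "p \<in> C" "x \<in> snd p" unfolding SgU_def by blast
    then have "x \<in> age I mu (fst p)" using Pm[OF p(1)] by blast
    then show "x \<in> age I mu U" using emb_age[OF emb[OF p(1)]] by blast
  qed
  have UD: "fst U \<subseteq> D SgU"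
  proof
    fix y assume "y \<in> fst U"
    then obtain p where p: "p \<in> C" "y \<in> fst (fst p)" unfolding U_def UC_def by auto
    then have "y \<in> D (snd p)" using Pm[OF p(1)] by blast
    moreover have "D (snd p) \<subseteq> D SgU" using p(1) unfolding SgU_def by (intro D_mono) blast
    ultimately show "y \<in> D SgU" by blast
  qed
  have uP: "(U, SgU) \<in> P" unfolding Pmem using stU ageU dcU SgU_age UD by simp
  have "\<forall>p\<in>C. Q p (U, SgU)"
  proof
    fix p assume p: "p \<in> C"
    have "le (fst p) U" unfolding le_def using sub[OF p] key[OF p] unfolding U_def by auto
    moreover have "snd p \<subseteq> SgU" using p unfolding SgU_def by blast
    ultimately show "Q p (U, SgU)" unfolding Q_def by simp
  qed
  then show ?thesis using uP by blast
qed

lemma r_antisym: "antisym r" using r_wo unfolding order_on_defs by blast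

lemma step:
  assumes MP: "(M, Sg) \<in> P" and ne: "Sg \<noteq> A"
  shows "\<exists>q\<in>P. Q (M, Sg) q \<and> q \<noteq> (M, Sg)"
proof -
  have stM: "is_struct I mu M" and ageM: "age I mu M \<subseteq> A" and dcS: "dc Sg"
    and Sage: "Sg \<subseteq> age I mu M" and MD: "fst M \<subseteq> D Sg" using MP unfolding P_def by auto
  have SA: "Sg \<subseteq> A" using dcS unfolding dc_def by blast
  have wo: "wo_rel r" using r_wo unfolding wo_rel_def .
  define a where "a = wo_rel.minim r (A - Sg)"
  have AS: "A - Sg \<subseteq> Field r" "A - Sg \<noteq> {}" using r_F SA ne by auto
  have aA: "a \<in> A - Sg" unfolding a_def using wo_rel.minim_in[OF wo AS] .
  have amin: "\<And>z. z \<in> A - Sg \<Longrightarrow> (a, z) \<in> r" unfolding a_def using wo_rel.minim_least[OF wo AS(1)] by blast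
  have sm: "(card_of (fst M), card_of A) \<in> ordLess" using small[OF MP] aA by blast
  have ext: "extendable I mu A M" using ep stM sm ageM unfolding extension_property_def by blast
  define B where "B = rep a"
  have B: "B \<in> a" "a = isotype I mu B" "finite (fst B)" using rep aA unfolding B_def by auto
  obtain C :: "('i, 'i univ) struc" where C: "is_struct I mu C" "age I mu C \<subseteq> A" "embeds I mu M C" "embeds I mu B C"
    using ext aA B(1) unfolding extendable_def by blast
  obtain f where f: "embedding I mu f M C" using C(3) unfolding embeds_def by blast
  obtain g where g: "embedding I mu g B C" using C(4) unfolding embeds_def by blast
  define n where "n = sz a"
  have n: "n = card (fst B)" unfolding n_def sz_def B_def ..
  obtain bb where bb: "bij_betw bb {0..<n} (fst B)" using ex_bij_betw_nat_finite[OF B(3)] n by blast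
  define New where "New = {k. k < n \<and> g (bb k) \<notin> f ` fst M}"
  define Y where "Y = fst M \<union> enc ` ({a} \<times> New)"
  define \<phi> where "\<phi> y = (if y \<in> fst M then f y else g (bb (snd (inv_into (A \<times> UNIV) enc y))))" for y
  have encnot: "enc (a, k) \<notin> fst M" for k
  proof
    assume "enc (a, k) \<in> fst M"
    then obtain x j where xj: "x \<in> Sg" "enc (a, k) = enc (x, j)" using MD unfolding D_def by blast
    then have "(a, k) = (x, j)" using enc aA SA by (intro inj_onD[OF enc]) auto
    then show False using xj aA by auto
  qed
  have phinew: "\<phi> (enc (a, k)) = g (bb k)" for k
    using encnot[of k] inv_into_f_f[OF enc, of "(a, k)"] aA unfolding \<phi>_def by auto
  have fM: "f ` fst M \<subseteq> fst C" "inj_on f (fst M)" using f unfolding embedding_def by auto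
  have gB: "g ` fst B \<subseteq> fst C" "inj_on g (fst B)" using g unfolding embedding_def by auto
  have bbB: "k < n \<Longrightarrow> bb k \<in> fst B" for k using bb unfolding bij_betw_def by auto
  have bbinj: "inj_on bb {0..<n}" using bb unfolding bij_betw_def by auto
  have injphi: "inj_on \<phi> Y"
  proof (rule inj_onI)
    fix y1 y2 assume y1: "y1 \<in> Y" and y2: "y2 \<in> Y" and eq: "\<phi> y1 = \<phi> y2"
    show "y1 = y2"
    proof (cases "y1 \<in> fst M")
      case True note T1 = True
      show ?thesis
      proof (cases "y2 \<in> fst M")
        case True
        then show ?thesis using T1 eq fM(2) unfolding \<phi>_def by (auto dest: inj_onD)
      next
        case False
        then obtain k where k: "y2 = enc (a, k)" "k \<in> New" using y2 unfolding Y_def by blast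
        have "\<phi> y1 = f y1" using T1 unfolding \<phi>_def by simp
        then have "f y1 = g (bb k)" using eq phinew k by simp
        then show ?thesis using k(2) T1 unfolding New_def by auto
      qed
    next
      case False note F1 = False
      then obtain k where k: "y1 = enc (a, k)" "k \<in> New" using y1 unfolding Y_def by blast
      show ?thesis
      proof (cases "y2 \<in> fst M")
        case True
        have "\<phi> y2 = f y2" using True unfolding \<phi>_def by simp
        then have "f y2 = g (bb k)" using eq phinew k by simp
        then show ?thesis using k(2) True unfolding New_def by auto
      next
        case False
        then obtain k2 where k2: "y2 = enc (a, k2)" "k2 \<in> New" using y2 unfolding Y_def by blast
        have "g (bb k) = g (bb k2)" using eq phinew k k2 by simp
        moreover have "k < n" "k2 < n" using k k2 unfolding New_def by auto
        ultimately have "bb k = bb k2" using gB(2) bbB by (auto dest: inj_onD)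
        then have "k = k2" using bbinj \<open>k < n\<close> \<open>k2 < n\<close> by (auto dest: inj_onD)
        then show ?thesis using k k2 by simp
      qed
    qed
  qed
  have phiY: "\<phi> ` Y \<subseteq> fst C"
  proof
    fix z assume "z \<in> \<phi> ` Y"
    then obtain y where y: "y \<in> Y" "z = \<phi> y" by blast
    show "z \<in> fst C"
    proof (cases "y \<in> fst M")
      case True then show ?thesis using y fM(1) unfolding \<phi>_def by auto
    next
      case False
      then obtain k where k: "y = enc (a, k)" "k \<in> New" using y unfolding Y_def by blast
      then show ?thesis using y phinew bbB gB(1) unfolding New_def by auto
    qed
  qed
  define M' where "M' = pb I mu C Y \<phi>"
  have eM': "embedding I mu \<phi> M' C" unfolding M'_def using pb_emb[OF injphi phiY] .
  have stM': "is_struct I mu M'" unfolding M'_def by (rule pb_struct)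
  have ageM': "age I mu M' \<subseteq> A" using emb_age[OF eM'] C(2) by blast
  have fstM': "fst M' = Y" unfolding M'_def pb_def by simp
  have sndM': "snd M' i xs \<longleftrightarrow> i \<in> I \<and> length xs = mu i \<and> set xs \<subseteq> Y \<and> snd C i (map \<phi> xs)" for i xs
    unfolding M'_def pb_def by simp
  have mapphi: "set xs \<subseteq> fst M \<Longrightarrow> map \<phi> xs = map f xs" for xs
    unfolding \<phi>_def by (auto intro: map_cong)
  have leMM': "le M M'"
    unfolding le_def
  proof (intro conjI allI)
    show "fst M \<subseteq> fst M'" unfolding fstM' Y_def by blast
    fix i xs
    show "snd M i xs \<longleftrightarrow> snd M' i xs \<and> set xs \<subseteq> fst M"
    proof
      assume h: "snd M i xs"
      then have h2: "i \<in> I" "length xs = mu i" "set xs \<subseteq> fst M" using stM unfolding is_struct_def by auto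
      then have "snd C i (map f xs)" using f h unfolding embedding_def by blast
      moreover have m: "map \<phi> xs = map f xs" using mapphi[OF h2(3)] .
      ultimately show "snd M' i xs \<and> set xs \<subseteq> fst M" using h2 unfolding sndM' Y_def m by auto
    next
      assume h: "snd M' i xs \<and> set xs \<subseteq> fst M"
      have m: "map \<phi> xs = map f xs" using mapphi h by blast
      have "i \<in> I" "length xs = mu i" "snd C i (map f xs)" using h unfolding sndM' m by auto
      then show "snd M i xs" using f h unfolding embedding_def by blast
    qed
  qed
  have embMM': "embedding I mu id M M'"
    unfolding embedding_def using leMM' unfolding le_def by auto
  have aM': "a \<in> age I mu M'"
  proof -
    define X' where "X' = {y \<in> Y. \<phi> y \<in> g ` fst B}"
    have img: "\<phi> ` X' = g ` fst B"
    proof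
      show "\<phi> ` X' \<subseteq> g ` fst B" unfolding X'_def by blast
      show "g ` fst B \<subseteq> \<phi> ` X'"
      proof
        fix z assume "z \<in> g ` fst B"
        then obtain b where b: "b \<in> fst B" "z = g b" by blast
        have "b \<in> bb ` {0..<n}" using b(1) bb unfolding bij_betw_def by simp
        then obtain k where k: "k < n" "b = bb k" by auto
        show "z \<in> \<phi> ` X'"
        proof (cases "g b \<in> f ` fst M")
          case True
          then obtain m where m: "m \<in> fst M" "g b = f m" by blast
          then have "\<phi> m = z" using b unfolding \<phi>_def by simp
          moreover have "m \<in> X'" using m b \<open>\<phi> m = z\<close> unfolding X'_def Y_def by auto
          ultimately show ?thesis by blast
        next
          case False
          then have kN: "k \<in> New" using k unfolding New_def by auto
          then have "\<phi> (enc (a, k)) = z" using phinew b k by simp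
          moreover have "enc (a, k) \<in> X'" using kN b \<open>\<phi> (enc (a, k)) = z\<close> unfolding X'_def Y_def by auto
          ultimately show ?thesis by blast
        qed
      qed
    qed
    have X'Y: "X' \<subseteq> fst M'" unfolding X'_def fstM' by blast
    have finX': "finite X'"
    proof (rule finite_imageD)
      show "finite (\<phi> ` X')" using img B(3) by simp
      show "inj_on \<phi> X'" using injphi X'Y fstM' by (auto intro: inj_on_subset)
    qed
    have "isotype I mu (induced M' X') = isotype I mu (induced C (\<phi> ` X'))"
      using isotype_iso[OF emb_induced_iso[OF eM' X'Y]] .
    also have "\<dots> = isotype I mu (induced C (g ` fst B))" using img by simp
    also have "\<dots> = isotype I mu (induced B (fst B))"
      using isotype_iso[OF emb_induced_iso[OF g, of "fst B"]] by simp
    also have "\<dots> = isotype I mu B" using isotype_iso[OF iso_induced_self[of I mu B]] by simp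
    also have "\<dots> = a" using B(2) by simp
    finally show ?thesis using X'Y finX' unfolding age_def by blast
  qed
  define Sg' where "Sg' = insert a Sg"
  have dc': "dc Sg'" unfolding dc_def
  proof (intro conjI ballI allI impI)
    show "Sg' \<subseteq> A" unfolding Sg'_def using SA aA by blast
    fix x y assume x: "x \<in> Sg'" and y: "(y, x) \<in> r"
    show "y \<in> Sg'"
    proof (cases "x \<in> Sg")
      case True then show ?thesis using dcS y unfolding dc_def Sg'_def by blast
    next
      case False
      then have xa: "x = a" using x unfolding Sg'_def by blast
      have "y \<in> A" using y r_F unfolding Field_def by blast
      show ?thesis
      proof (rule ccontr)
        assume "y \<notin> Sg'"
        then have "y \<in> A - Sg" "y \<noteq> a" using \<open>y \<in> A\<close> unfolding Sg'_def by auto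
        then have "(a, y) \<in> r" using amin by blast
        then show False using y xa r_antisym \<open>y \<noteq> a\<close> unfolding antisym_def by blast
      qed
    qed
  qed
  have Sg'age: "Sg' \<subseteq> age I mu M'" unfolding Sg'_def using Sage emb_age[OF embMM'] aM' by blast
  have M'D: "fst M' \<subseteq> D Sg'"
  proof
    fix y assume "y \<in> fst M'"
    then have "y \<in> fst M \<or> (\<exists>k\<in>New. y = enc (a, k))" unfolding fstM' Y_def by blast
    then show "y \<in> D Sg'"
    proof
      assume "y \<in> fst M"
      then show ?thesis using MD D_mono[of Sg Sg'] unfolding Sg'_def by blast
    next
      assume "\<exists>k\<in>New. y = enc (a, k)"
      then obtain k where "k \<in> New" "y = enc (a, k)" by blast
      then show ?thesis unfolding D_def Sg'_def New_def n_def by blast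
    qed
  qed
  have qP: "(M', Sg') \<in> P" unfolding P_def using stM' ageM' dc' Sg'age M'D by simp
  have "Q (M, Sg) (M', Sg')" unfolding Q_def using leMM' unfolding Sg'_def by auto
  moreover have "(M', Sg') \<noteq> (M, Sg)" using aA unfolding Sg'_def by auto
  ultimately show ?thesis using qP by blast
qed

lemma main: "\<exists>S :: ('i, 'i univ) struc. is_struct I mu S \<and> age I mu S = A"
proof -
  define R where "R = relation_of Q P"
  have Qrefl: "Q p p" if "p \<in> P" for p
    using that unfolding Pmem Q_def le_def is_struct_def by auto
  have Qtrans: "Q p q \<Longrightarrow> Q q w \<Longrightarrow> Q p w" for p q w
    unfolding Q_def le_def by blast
  have Qanti: "p = q" if "p \<in> P" "q \<in> P" "Q p q" "Q q p" for p q
  proof -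
    have c: "fst (fst p) = fst (fst q)" using that unfolding Q_def le_def by blast
    have sq: "is_struct I mu (fst q)" using that Pmem by blast
    have "snd (fst p) i xs = snd (fst q) i xs" for i xs
      using that(3) c sq unfolding Q_def le_def is_struct_def by blast
    then have "snd (fst p) = snd (fst q)" by (intro ext)
    then have "fst p = fst q" using c by (simp add: prod_eq_iff)
    moreover have "snd p = snd q" using that unfolding Q_def by blast
    ultimately show ?thesis by (simp add: prod_eq_iff)
  qed
  have po: "partial_order_on P R" unfolding R_def
    by (rule partial_order_on_relation_ofI) (use Qrefl Qtrans Qanti in blast)+
  have PO: "Partial_order R" using Partial_order_relation_ofI po unfolding R_def by blast
  have FR: "Field R = P"
  proof
    show "Field R \<subseteq> P" unfolding R_def Field_def relation_of_def by auto
    show "P \<subseteq> Field R"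
    proof
      fix p assume "p \<in> P"
      then have "(p, p) \<in> R" unfolding R_def relation_of_def using Qrefl by blast
      then show "p \<in> Field R" unfolding Field_def by blast
    qed
  qed
  have "\<exists>m\<in>Field R. \<forall>a\<in>Field R. (m, a) \<in> R \<longrightarrow> a = m"
  proof (rule Zorns_po_lemma[OF PO])
    fix C assume C: "C \<in> Chains R"
    show "\<exists>u\<in>Field R. \<forall>a\<in>C. (a, u) \<in> R"
    proof (cases "C = {}")
      case True then show ?thesis using emptyP FR by blast
    next
      case False
      have CP: "C \<subseteq> P" using C unfolding Chains_def R_def relation_of_def by blast
      have ch: "\<forall>p\<in>C. \<forall>q\<in>C. Q p q \<or> Q q p" using C unfolding Chains_def R_def relation_of_def by blast
      obtain u where u: "u \<in> P" "\<forall>p\<in>C. Q p u" using chain_bound[OF CP ch False] by blast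
      then show ?thesis using CP FR unfolding R_def relation_of_def by blast
    qed
  qed
  then obtain m where m: "m \<in> P" "\<forall>a\<in>P. (m, a) \<in> R \<longrightarrow> a = m" using FR by blast
  obtain M Sg where mMS: "m = (M, Sg)" by (cases m)
  show ?thesis
  proof (cases "Sg = A")
    case True
    have "is_struct I mu M" "age I mu M \<subseteq> A" "Sg \<subseteq> age I mu M" using m(1) unfolding mMS P_def by auto
    then have "is_struct I mu M \<and> age I mu M = A" using True by blast
    then show ?thesis by blast
  next
    case False
    obtain q where q: "q \<in> P" "Q (M, Sg) q" "q \<noteq> (M, Sg)" using step[OF m(1)[unfolded mMS] False] by blast
    then have "(m, q) \<in> R" using m(1) unfolding R_def relation_of_def mMS by blast
    then show ?thesis using m(2) q mMS by blast
  qed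
qed

end

lemma infinite_case:
  assumes sig: "signature I mu" and idl: "ideal I mu A" and ep: "extension_property I mu A"
    and infA: "infinite A"
  shows "\<exists>S :: ('i, 'i univ) struc. is_struct I mu S \<and> age I mu S = A"
proof -
  have "|A \<times> (UNIV :: nat set)| =o |A|"
    using card_of_Times_infinite[OF infA, of "UNIV :: nat set"] infA infinite_iff_card_of_nat by blast
  moreover have "|A| \<le>o |UNIV :: 'i univ set|" by (rule card_of_mono1) simp
  ultimately have "|A \<times> (UNIV :: nat set)| \<le>o |UNIV :: 'i univ set|" by (rule ordIso_ordLeq_trans)
  then obtain enc :: "'i univ \<times> nat \<Rightarrow> 'i univ" where enc: "inj_on enc (A \<times> UNIV)"
    using card_of_ordLeq[symmetric, of "A \<times> (UNIV :: nat set)" "UNIV :: 'i univ set"] by blast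
  interpret ctx I mu A enc using sig idl ep infA enc by unfold_locales
  show ?thesis by (rule main)
qed

theorem lemma1:
  fixes I :: "'i set" and mu :: "'i \<Rightarrow> nat" and A :: "('i, nat) struc set set"
  assumes "signature I mu"
    and "ideal I mu A"
    and "extension_property I mu A"
  shows "\<exists>S :: ('i, 'i univ) struc. is_struct I mu S \<and> age I mu S = A"
proof (cases "finite A")
  case True
  then show ?thesis using finite_case[OF assms(2)] by blast
next
  case False
  then show ?thesis using infinite_case[OF assms] by blast
qed

end
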